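(* Let $n\ge3$, $1<k<n/2$, $p>\frac{nk}{n-2k}$, and let $u$ be a regular solution of (1.6). Then $u'(r)<0$ for all $r>0$, $u(r)\to0$ as $r\to\infty$, and there are constants $C_1,C_2>0$ such that for all sufficiently large $r$, $$C_1r^{-\frac{n-2k}{k}}\le u(r)\le C_2r^{-\frac{2k}{p-k}}.$$
   Context: Problem (1.6) is: given $\rho>0$, find $u$ with $-\tfrac{1}{k}C_{n-1}^{k-1}(r^{n-k}|u'|^{k-1}u')'=r^{n-1}u^{p}$, $u(r)>0$ for all $r>0$, $u'(0)=0$, $u(0)=\rho$, where $C_{n-1}^{k-1}$ is the binomial coefficient. A solution $u$ of (1.6) is regular if $x\mapsto u(|x|)$ belongs to $C^2(\mathbb{R}^n)$. *)

theory Defs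
  imports "HOL-Analysis.Analysis"
begin

definition C2_UNIV :: "('a::euclidean_space \<Rightarrow> real) \<Rightarrow> bool" where
  "C2_UNIV f \<longleftrightarrow> (\<exists>(f1 :: 'a \<Rightarrow> ('a \<Rightarrow>\<^sub>L real)) (f2 :: 'a \<Rightarrow> ('a \<Rightarrow>\<^sub>L ('a \<Rightarrow>\<^sub>L real))).
      (\<forall>x. (f has_derivative blinfun_apply (f1 x)) (at x)) \<and>
      (\<forall>x. (f1 has_derivative blinfun_apply (f2 x)) (at x)) \<and>
      continuous_on UNIV f2)"

definition solves_1_6 :: "nat \<Rightarrow> nat \<Rightarrow> real \<Rightarrow> real \<Rightarrow> (real \<Rightarrow> real) \<Rightarrow> bool" where
  "solves_1_6 n k p \<rho> u \<longleftrightarrow>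
     (\<forall>r>0. u r > 0) \<and> u 0 = \<rho> \<and>
     (u has_real_derivative 0) (at 0 within {0..}) \<and>
     (\<forall>r>0. u differentiable (at r) \<and>
        ((\<lambda>s. s ^ (n - k) * \<bar>deriv u s\<bar> ^ (k - 1) * deriv u s) has_real_derivative
          (- (real k / real (n - 1 choose (k - 1))) * r ^ (n - 1) * u r powr p)) (at r))"

definition regular_solution_1_6 ::
    "'n::finite itself \<Rightarrow> nat \<Rightarrow> real \<Rightarrow> real \<Rightarrow> (real \<Rightarrow> real) \<Rightarrow> bool" where
  "regular_solution_1_6 TYPE('n) k p \<rho> u \<longleftrightarrow>
     solves_1_6 CARD('n) k p \<rho> u \<and> C2_UNIV (\<lambda>x::real^'n. u (norm x))"

end

theory Submission
  imports Defs
begin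

lemma pow_root_k:
  fixes x a :: real and k :: nat
  assumes "0 < x" "0 < k"
  shows "(x powr (a / real k)) ^ k = x powr a"
  using assms by (simp add: powr_power)

theorem lemma2p1:
  fixes u :: "real \<Rightarrow> real" and n k :: nat and p \<rho> :: real
  assumes "CARD('n::finite) = n" and "n \<ge> 3" and "1 < k" and "real k < real n / 2"
    and "p > real n * real k / (real n - 2 * real k)" and "\<rho> > 0"
    and "regular_solution_1_6 TYPE('n) k p \<rho> u"
  shows "(\<forall>r>0. deriv u r < 0) \<and> (u \<longlongrightarrow> 0) at_top \<and>
    (\<exists>C1 C2. C1 > 0 \<and> C2 > 0 \<and>
      (\<forall>\<^sub>F r in at_top. C1 * r powr (- ((real n - 2 * real k) / real k)) \<le> u r \<and>
                         u r \<le> C2 * r powr (- (2 * real k / (p - real k)))))"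
proof -
  define c where "c = real k / real (n - 1 choose (k - 1))"
  define D where "D = deriv u"
  define w where "w = (\<lambda>s::real. s ^ (n - k) * \<bar>D s\<bar> ^ (k - 1) * D s)"
  have sol: "solves_1_6 n k p \<rho> u"
    using assms(7) assms(1) unfolding regular_solution_1_6_def by simp
  have upos: "\<And>r. r > 0 \<Longrightarrow> u r > 0" and u0: "u 0 = \<rho>"
    and d0: "(u has_real_derivative 0) (at 0 within {0..})"
    and diff: "\<And>r. r > 0 \<Longrightarrow> u differentiable (at r)"
    and wd: "\<And>r. r > 0 \<Longrightarrow> (w has_real_derivative (- c * r ^ (n - 1) * u r powr p)) (at r)"
    using sol unfolding solves_1_6_def c_def w_def D_def by auto
  have uD: "\<And>r. r > 0 \<Longrightarrow> (u has_real_derivative D r) (at r)"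
    using diff DERIV_deriv_iff_real_differentiable D_def by blast
  have kn: "2 * k < n" using assms(4) by linarith
  have cpos: "c > 0" unfolding c_def using assms(3) kn by simp
  have wdec: "\<And>a b. 0 < a \<Longrightarrow> a < b \<Longrightarrow> w b < w a"
  proof -
    fix a b :: real assume ab: "0 < a" "a < b"
    show "w b < w a"
    proof (rule DERIV_neg_imp_decreasing[OF ab(2)])
      fix x assume "a \<le> x" "x \<le> b"
      hence x: "x > 0" using ab by linarith
      show "\<exists>y. DERIV w x :> y \<and> y < 0"
        using wd[OF x] cpos upos[OF x] x by (intro exI[of _ "- c * x ^ (n - 1) * u x powr p"]) simp
    qed
  qed
  have ucont: "\<And>r. continuous_on {0..r} u"
  proof -
    fix r :: real
    have c0: "continuous (at 0 within {0..}) u" using d0 by (rule DERIV_continuous)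
    show "continuous_on {0..r} u"
      unfolding continuous_on_eq_continuous_within
    proof
      fix x assume x: "x \<in> {0..r}"
      show "continuous (at x within {0..r}) u"
      proof (cases "x = 0")
        case True thus ?thesis using c0 continuous_within_subset[of 0 "{0..}" u "{0..r}"] by auto
      next
        case False hence "x > 0" using x by auto
        thus ?thesis using diff[OF \<open>x > 0\<close>]
          by (intro differentiable_imp_continuous_within) (rule differentiable_at_withinI)
      qed
    qed
  qed
  have ulim: "(u \<longlongrightarrow> \<rho>) (at_right 0)"
  proof -
    have c0: "continuous (at 0 within {0..}) u" using d0 by (rule DERIV_continuous)
    hence "(u \<longlongrightarrow> \<rho>) (at 0 within {0..})" using u0 by (simp add: continuous_within)
    thus ?thesis by (rule tendsto_within_subset) auto
  qed
  have Dneg: "\<And>r. r > 0 \<Longrightarrow> D r < 0"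
  proof (rule ccontr)
    fix r :: real assume r: "r > 0" and nD: "\<not> D r < 0"
    have "w r \<ge> 0" unfolding w_def using r nD by simp
    define r1 where "r1 = r / 2"
    have r1: "0 < r1" "r1 < r" unfolding r1_def using r by auto
    define a where "a = w r1"
    have apos: "a > 0" unfolding a_def using wdec[OF r1] \<open>w r \<ge> 0\<close> by linarith
    have key: "D x > 0 \<and> x ^ (n - k) * D x ^ k > a" if x: "0 < x" "x < r1" for x
    proof -
      have wx: "w x > a" unfolding a_def using wdec[OF x] .
      have Dx: "D x > 0"
      proof (rule ccontr)
        assume "\<not> D x > 0"
        hence "w x \<le> 0" unfolding w_def using x
          by (simp add: mult_nonneg_nonpos)
        thus False using wx apos by linarith
      qed
      have "\<bar>D x\<bar> ^ (k - 1) * D x = D x ^ k"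
        using Dx assms(3) by (simp add: power_Suc2[symmetric])
      hence "w x = x ^ (n - k) * D x ^ k" unfolding w_def by (simp add: mult.assoc)
      thus ?thesis using Dx wx by simp
    qed
    have "\<forall>\<^sub>F y in at_right 0. dist (u y) \<rho> < min 1 a"
      using ulim apos unfolding tendsto_iff by (metis min_less_iff_conj zero_less_one)
    then obtain \<delta> where \<delta>: "\<delta> > 0" "\<And>y. y > 0 \<Longrightarrow> y < \<delta> \<Longrightarrow> dist (u y) \<rho> < min 1 a"
      unfolding eventually_at_right_field by auto
    define y where "y = min \<delta> (min r1 1) / 2"
    have y: "0 < y" "y < \<delta>" "y < r1" "y < 1" unfolding y_def using \<delta>(1) r1 by auto
    obtain l z where z: "0 < z" "z < y" "(u has_real_derivative l) (at z)" "u y - u 0 = (y - 0) * l"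
      using MVT[OF y(1) ucont] diff by force
    have lz: "l = D z" using DERIV_unique[OF z(3) uD[OF z(1)]] .
    have kz: "D z > 0" "z ^ (n - k) * D z ^ k > a" using key[OF z(1)] z(2) y(3) by auto
    have e1: "u y - \<rho> = y * D z" using z(4) lz u0 by simp
    have "z ^ (n - k) \<le> y ^ (n - k)" using z by (intro power_mono) auto
    hence "z ^ (n - k) * D z ^ k \<le> y ^ (n - k) * D z ^ k"
      using kz(1) by (intro mult_right_mono) auto
    moreover have "y ^ (n - k) \<le> y ^ k" using y assms(3) kn
      by (intro power_decreasing) auto
    hence "y ^ (n - k) * D z ^ k \<le> y ^ k * D z ^ k" using kz(1) by (intro mult_right_mono) auto
    ultimately have "(u y - \<rho>) ^ k > a" using kz(2) e1 by (simp add: power_mult_distrib)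
    moreover have "0 < u y - \<rho>" using e1 y kz by simp
    moreover have "u y - \<rho> < min 1 a" using \<delta>(2)[OF y(1,2)] unfolding dist_real_def by (auto simp: abs_less_iff)
    ultimately have "(u y - \<rho>) ^ k \<le> (u y - \<rho>) ^ 1"
      using assms(3) by (intro power_decreasing) auto
    thus False using \<open>(u y - \<rho>) ^ k > a\<close> \<open>u y - \<rho> < min 1 a\<close> by simp
  qed
  have wform: "w r = - (r ^ (n - k) * \<bar>D r\<bar> ^ k)" if r: "r > 0" for r
  proof -
    have "D r < 0" using Dneg[OF r] .
    hence "\<bar>D r\<bar> ^ (k - 1) * D r = - (\<bar>D r\<bar> ^ (k - 1) * \<bar>D r\<bar>)" by simp
    also have "\<bar>D r\<bar> ^ (k - 1) * \<bar>D r\<bar> = \<bar>D r\<bar> ^ k"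
      using assms(3) by (simp add: power_Suc2[symmetric])
    finally show ?thesis unfolding w_def by (simp add: mult.assoc)
  qed
  have npos: "real n > 0" using assms(2) by simp
  have dpos: "real n - 2 * real k > 0" using kn by simp
  have pk: "p > real k"
  proof -
    have "real k * (real n - 2 * real k) < real n * real k"
      using assms(3) by (simp add: algebra_simps)
    hence "real k < real n * real k / (real n - 2 * real k)" using dpos by (simp add: less_divide_eq)
    thus ?thesis using assms(5) by linarith
  qed
  define \<psi> where "\<psi> = (\<lambda>r. w r + c / real n * r ^ n * u r powr p)"
  have \<psi>d: "(\<psi> has_real_derivative (c / real n * r ^ n * (p * u r powr (p - 1) * D r))) (at r)"
    if r: "r > 0" for r
  proof -
    have h1: "((\<lambda>s. u s powr p) has_real_derivative p * u r powr (p - 1) * D r) (at r)"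
      using DERIV_fun_powr[OF uD[OF r] upos[OF r], of p] by simp
    have h2: "((\<lambda>s. s ^ n) has_real_derivative real n * r ^ (n - 1)) (at r)"
      using DERIV_pow[of n r] by simp
    note h3 = DERIV_add[OF wd[OF r] DERIV_mult[OF DERIV_cmult[OF h2, of "c / real n"] h1]]
    show ?thesis unfolding \<psi>_def
      apply (rule DERIV_cong[OF h3])
      using npos by (simp add: field_simps)
  qed
  have \<psi>le: "\<psi> r \<le> 0" if r: "r > 0" for r
  proof -
    have ev: "\<forall>\<^sub>F s in at_right 0. \<psi> r \<le> c / real n * s ^ n * u s powr p"
      unfolding eventually_at_right_field
    proof (intro exI[of _ r] conjI allI impI)
      fix s :: real assume s: "s > 0" "s < r"
      have "\<psi> r \<le> \<psi> s"
      proof (rule DERIV_nonpos_imp_nonincreasing[of s r])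
        fix x assume "s \<le> x" "x \<le> r"
        hence x: "x > 0" using s by linarith
        have "c / real n * x ^ n * (p * u x powr (p - 1) * D x) \<le> 0"
          using cpos npos x upos[OF x] Dneg[OF x] assms(5)
        proof -
          have "p > 0" using assms(5) npos kn assms(3)
            using pk assms(3) by linarith
          hence "p * u x powr (p - 1) * D x \<le> 0"
            using Dneg[OF x] by (simp add: mult_nonneg_nonpos)
          moreover have "c / real n * x ^ n \<ge> 0" using cpos npos x by simp
          ultimately show ?thesis using mult_nonneg_nonpos by blast
        qed
        thus "\<exists>y. (\<psi> has_real_derivative y) (at x) \<and> y \<le> 0" using \<psi>d[OF x] by blast
      qed (use s in simp)
      moreover have "w s < 0" using wform[OF s(1)] s(1) Dneg[OF s(1)] by simp
      ultimately show "\<psi> r \<le> c / real n * s ^ n * u s powr p" unfolding \<psi>_def by simp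
    qed (use r in auto)
    have lim: "((\<lambda>s. c / real n * s ^ n * u s powr p) \<longlongrightarrow> c / real n * 0 ^ n * \<rho> powr p) (at_right 0)"
      using assms(6) by (intro tendsto_mult tendsto_const tendsto_power tendsto_ident_at tendsto_powr ulim) auto
    have "\<psi> r \<le> c / real n * 0 ^ n * \<rho> powr p"
      by (rule tendsto_le[OF trivial_limit_at_right_real lim tendsto_const ev])
    moreover have "(0::real) ^ n = 0" using assms(2) by simp
    ultimately show ?thesis by simp
  qed
  have Dk: "\<bar>D r\<bar> ^ k \<ge> c / real n * r ^ k * u r powr p" if r: "r > 0" for r
  proof -
    have "r ^ (n - k) * \<bar>D r\<bar> ^ k \<ge> c / real n * r ^ n * u r powr p"
      using \<psi>le[OF r] wform[OF r] unfolding \<psi>_def by simp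
    moreover have "r ^ n = r ^ (n - k) * r ^ k" using kn by (simp add: power_add[symmetric])
    ultimately have "r ^ (n - k) * (c / real n * r ^ k * u r powr p) \<le> r ^ (n - k) * \<bar>D r\<bar> ^ k"
      by (simp add: mult_ac)
    thus ?thesis by (rule mult_left_le_imp_le) (use r in simp)
  qed
  define b where "b = (c / real n) powr (1 / real k)"
  have bpos: "b > 0" unfolding b_def using cpos npos by simp
  have Dlow: "\<bar>D r\<bar> \<ge> b * r * u r powr (p / real k)" if r: "r > 0" for r
  proof (rule power_le_imp_le_base[of _ "k - 1"])
    have sk: "Suc (k - 1) = k" using assms(3) by simp
    have "(b * r * u r powr (p / real k)) ^ k = b ^ k * r ^ k * (u r powr (p / real k)) ^ k"
      by (simp add: power_mult_distrib)
    also have "b ^ k = c / real n" unfolding b_def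
      using pow_root_k[of "c / real n" k 1] cpos npos assms(3) by simp
    also have "(u r powr (p / real k)) ^ k = u r powr p"
      using pow_root_k[of "u r" k p] upos[OF r] assms(3) by simp
    finally show "(b * r * u r powr (p / real k)) ^ Suc (k - 1) \<le> \<bar>D r\<bar> ^ Suc (k - 1)" 
      unfolding sk using Dk[OF r] by simp
  qed simp
  define m where "m = (p - real k) / real k"
  have mpos: "m > 0" unfolding m_def using pk assms(3) by simp
  define \<phi> where "\<phi> = (\<lambda>s. u s powr (- m) - b * m / 2 * s ^ 2)"
  have \<phi>d: "\<exists>y. (\<phi> has_real_derivative y) (at s) \<and> y \<ge> 0" if s: "s > 0" for s
  proof -
    have h1: "((\<lambda>s. u s powr (- m)) has_real_derivative (- m) * u s powr (- m - 1) * D s) (at s)"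
      using DERIV_fun_powr[OF uD[OF s] upos[OF s], of "- m"] by simp
    have h2: "((\<lambda>s. b * m / 2 * s ^ 2) has_real_derivative b * m / 2 * (2 * s)) (at s)"
      using DERIV_cmult[OF DERIV_pow[of 2 s], of "b * m / 2"] by simp
    note h = DERIV_diff[OF h1 h2]
    have "u s powr (- m - 1) * (b * s * u s powr (p / real k)) = b * s * u s powr (- m - 1 + p / real k)"
      using upos[OF s] by (simp add: powr_add)
    also have "- m - 1 + p / real k = 0" unfolding m_def using assms(3) by (simp add: field_simps)
    finally have e: "u s powr (- m - 1) * (b * s * u s powr (p / real k)) = b * s" using upos[OF s] by simp
    have "u s powr (- m - 1) * (b * s * u s powr (p / real k)) \<le> u s powr (- m - 1) * \<bar>D s\<bar>"
      using Dlow[OF s] by (intro mult_left_mono) auto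
    hence "b * s \<le> u s powr (- m - 1) * (- D s)" using e Dneg[OF s] by simp
    hence "0 \<le> m * (u s powr (- m - 1) * (- D s) - b * s)" using mpos by simp
    hence "0 \<le> (- m) * u s powr (- m - 1) * D s - b * m / 2 * (2 * s)" by (simp add: algebra_simps)
    thus ?thesis using h unfolding \<phi>_def by blast
  qed
  define \<beta> where "\<beta> = b * m / 4"
  have \<beta>pos: "\<beta> > 0" unfolding \<beta>_def using bpos mpos by simp
  define C2 where "C2 = \<beta> powr (- 1 / m)"
  have C2pos: "C2 > 0" unfolding C2_def using \<beta>pos by simp
  have upper: "u r \<le> C2 * r powr (- (2 * real k / (p - real k)))" if r: "r \<ge> 2" for r
  proof -
    have "\<phi> 1 \<le> \<phi> r"
      by (rule DERIV_nonneg_imp_nondecreasing[of 1 r]) (use r \<phi>d in auto)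
    hence "u r powr (- m) \<ge> u 1 powr (- m) + b * m / 2 * (r ^ 2 - 1)"
      unfolding \<phi>_def by (simp add: right_diff_distrib)
    moreover have "u 1 powr (- m) \<ge> 0" by simp
    moreover have "b * m / 2 * (r ^ 2 - 1) \<ge> \<beta> * r ^ 2"
    proof -
      have "r ^ 2 \<ge> 2 ^ 2" by (rule power_mono) (use r in auto)
      hence "r ^ 2 \<ge> 4" by simp
      hence "r ^ 2 - 1 \<ge> r ^ 2 / 2" by simp
      hence "b * m / 2 * (r ^ 2 - 1) \<ge> b * m / 2 * (r ^ 2 / 2)"
        using bpos mpos by (intro mult_left_mono) auto
      thus ?thesis unfolding \<beta>_def by simp
    qed
    ultimately have le: "\<beta> * r ^ 2 \<le> u r powr (- m)" by linarith
    have rpos: "r > 0" using r by simp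
    have "u r = (u r powr (- m)) powr (- 1 / m)"
      using mpos upos[OF rpos] by (simp add: powr_powr)
    also have "\<dots> \<le> (\<beta> * r ^ 2) powr (- 1 / m)"
      by (rule powr_mono2') (use mpos \<beta>pos rpos le in auto)
    also have "\<dots> = C2 * (r ^ 2) powr (- 1 / m)" unfolding C2_def
      using \<beta>pos rpos by (simp add: powr_mult)
    also have "(r ^ 2) powr (- 1 / m) = r powr (- (2 * real k / (p - real k)))"
    proof -
      have "(r ^ 2) powr (- 1 / m) = (r powr 2) powr (- 1 / m)"
        using rpos powr_realpow[of r 2] by simp
      also have "\<dots> = r powr (2 * (- 1 / m))" by (simp add: powr_powr)
      also have "2 * (- 1 / m) = - (2 * real k / (p - real k))"
        unfolding m_def using pk assms(3) by (simp add: field_simps)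
      finally show ?thesis .
    qed
    finally show ?thesis .
  qed
  have ulim_top: "(u \<longlongrightarrow> 0) at_top"
  proof (rule tendsto_sandwich[of "\<lambda>_. 0" u at_top "\<lambda>r. C2 * r powr (- (2 * real k / (p - real k)))"])
    show "\<forall>\<^sub>F r in at_top. 0 \<le> u r"
      using eventually_gt_at_top[of 0] by eventually_elim (use upos in \<open>auto simp: less_imp_le\<close>)
    show "\<forall>\<^sub>F r in at_top. u r \<le> C2 * r powr (- (2 * real k / (p - real k)))"
      using eventually_ge_at_top[of 2] by eventually_elim (rule upper)
    have "((\<lambda>r. r powr (- (2 * real k / (p - real k)))) \<longlongrightarrow> 0) at_top"
      using pk assms(3) by (intro tendsto_neg_powr filterlim_ident) simp
    thus "((\<lambda>r. C2 * r powr (- (2 * real k / (p - real k)))) \<longlongrightarrow> 0) at_top"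
      using tendsto_mult_right_zero by blast
  qed simp
  define a1 where "a1 = - w 1"
  have a1pos: "a1 > 0" unfolding a1_def using wform[of 1] Dneg[of 1] by simp
  define e1 where "e1 = (real n - 2 * real k) / real k"
  have e1pos: "e1 > 0" unfolding e1_def using dpos assms(3) by simp
  define \<gamma> where "\<gamma> = a1 powr (1 / real k)"
  have \<gamma>pos: "\<gamma> > 0" unfolding \<gamma>_def using a1pos by simp
  have D2: "\<bar>D r\<bar> \<ge> \<gamma> * r powr (- e1 - 1)" if r: "r \<ge> 1" for r
  proof -
    have rpos: "r > 0" using r by simp
    have ex: "- e1 - 1 = (- (real n - real k)) / real k" unfolding e1_def using assms(3)
      by (simp add: field_simps)
    have "w r \<le> w 1" using wdec[of 1 r] r by (cases "r = 1") auto
    hence A: "a1 \<le> r ^ (n - k) * \<bar>D r\<bar> ^ k" unfolding a1_def using wform[OF rpos] by simp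
    have nk: "real (n - k) = real n - real k" using kn by simp
    have "r powr (- (real n - real k)) * r ^ (n - k) = 1"
    proof -
      have "r ^ (n - k) = r powr (real n - real k)" using powr_realpow[OF rpos, of "n - k"] nk by simp
      thus ?thesis using rpos by (simp add: powr_add[symmetric])
    qed
    show ?thesis
    proof (rule power_le_imp_le_base[of _ "k - 1"])
      have sk: "Suc (k - 1) = k" using assms(3) by simp
      have "(\<gamma> * r powr (- e1 - 1)) ^ k = \<gamma> ^ k * (r powr (- e1 - 1)) ^ k"
        by (simp add: power_mult_distrib)
      also have "\<gamma> ^ k = a1" unfolding \<gamma>_def
        using pow_root_k[of a1 k 1] a1pos assms(3) by simp
      also have "(r powr (- e1 - 1)) ^ k = r powr (- (real n - real k))"
        unfolding ex using pow_root_k[of r k "- (real n - real k)"] rpos assms(3) by simp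
      also have "a1 * r powr (- (real n - real k)) \<le> \<bar>D r\<bar> ^ k"
      proof -
        have "a1 * r powr (- (real n - real k)) \<le> r ^ (n - k) * \<bar>D r\<bar> ^ k * r powr (- (real n - real k))"
          using A by (intro mult_right_mono) auto
        also have "\<dots> = \<bar>D r\<bar> ^ k * (r powr (- (real n - real k)) * r ^ (n - k))" by (simp add: mult_ac)
        also have "\<dots> = \<bar>D r\<bar> ^ k" using \<open>r powr (- (real n - real k)) * r ^ (n - k) = 1\<close> by simp
        finally show ?thesis .
      qed
      finally show "(\<gamma> * r powr (- e1 - 1)) ^ Suc (k - 1) \<le> \<bar>D r\<bar> ^ Suc (k - 1)" unfolding sk .
    qed simp
  qed
  define C1 where "C1 = \<gamma> / e1"
  have C1pos: "C1 > 0" unfolding C1_def using \<gamma>pos e1pos by simp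
  define \<phi>2 where "\<phi>2 = (\<lambda>s. u s - C1 * s powr (- e1))"
  have lower: "C1 * r powr (- e1) \<le> u r" if r: "r \<ge> 1" for r
  proof -
    have ev: "\<forall>\<^sub>F R in at_top. \<phi>2 R \<le> \<phi>2 r"
      using eventually_ge_at_top[of r]
    proof eventually_elim
      case (elim R)
      show ?case
      proof (rule DERIV_nonpos_imp_nonincreasing[OF elim])
        fix x assume x: "r \<le> x" "x \<le> R"
        hence xpos: "x > 0" and x1: "x \<ge> 1" using r by auto
        have hp: "((\<lambda>x. x powr (- e1)) has_real_derivative (- e1) * x powr (- e1 - 1)) (at x)"
          by (rule has_real_derivative_powr[OF xpos])
        have h: "(\<phi>2 has_real_derivative (D x - C1 * ((- e1) * x powr (- e1 - 1)))) (at x)"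
          unfolding \<phi>2_def
          by (intro DERIV_diff uD[OF xpos] DERIV_cmult hp)
        have "D x - C1 * ((- e1) * x powr (- e1 - 1)) = D x + \<gamma> * x powr (- e1 - 1)"
          unfolding C1_def using e1pos by simp
        also have "\<dots> \<le> 0" using D2[OF x1] Dneg[OF xpos] by simp
        finally show "\<exists>y. (\<phi>2 has_real_derivative y) (at x) \<and> y \<le> 0" using h by blast
      qed
    qed
    have lim: "(\<phi>2 \<longlongrightarrow> 0 - C1 * 0) at_top" unfolding \<phi>2_def
      using e1pos by (intro tendsto_diff ulim_top tendsto_mult tendsto_const tendsto_neg_powr filterlim_ident) simp
    have "0 \<le> \<phi>2 r" using tendsto_le[OF trivial_limit_at_top_linorder tendsto_const lim ev] by simp
    thus ?thesis unfolding \<phi>2_def by simp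
  qed
  have fin: "\<forall>\<^sub>F r in at_top. C1 * r powr (- ((real n - 2 * real k) / real k)) \<le> u r \<and>
                         u r \<le> C2 * r powr (- (2 * real k / (p - real k)))"
    using eventually_ge_at_top[of 2]
    by eventually_elim (use lower upper in \<open>auto simp: e1_def\<close>)
  have "\<forall>r>0. deriv u r < 0" using Dneg unfolding D_def by blast
  thus ?thesis using ulim_top C1pos C2pos fin by blast
qed

end
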